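(* Let $c\ge1$, let $G$ be a multigraph with vertex set $V(G)=S\cup\mathcal{T}$ where $S\cap\mathcal{T}=\emptyset$ and $\mathcal{T}$ is the terminal set, and let $X\subseteq S$ be connectivity-$c$ linked in $G$. Then $G/X$ is a connectivity-$c$ mimicking network for $(G,\mathcal{T})$.
   Context: For disjoint vertex sets $A,B$, $E_G(A,B)$ is the set of edges with one endpoint in $A$ and the other in $B$; for $Y\subseteq V(G)$, $\partial(Y)=E_G(Y,V(G)\setminus Y)$. $\mathrm{mincut}_G(A,B)$ is the minimum number of edges whose removal leaves no path between $A$ and $B$ ($0$ if either set is empty), and $\mathrm{mincut}^c_G(A,B)=\min\{\mathrm{mincut}_G(A,B),c\}$. A multigraph $H$ is a connectivity-$c$ mimicking network for $(G,\mathcal{T})$ if $V(H)$ contains a copy of each terminal and $\mathrm{mincut}^c_H(A,B)=\mathrm{mincut}^c_G(A,B)$ for all disjoint $A,B\subseteq\mathcal{T}$. A set $X\subseteq S$ is connectivity-$c$ linked in $G$ if for every pair of disjoint sets $A,B$ with $A\cup B=X$ we have $|E_G(A,B)|\ge \min\big(|\partial(A)\cap\partial(X)|,\ |\partial(B)\cap\partial(X)|,\ c\big)$. $G/X$ denotes the multigraph obtained from $G$ by contracting all edges of $G[X]$ (identifying $X$ into a single vertex, deleting self-loops and keeping parallel edges). *)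

theory Defs
  imports Main
begin

text \<open>A finite multigraph: vertex set, a set of edge identifiers, and for each edge
  its set of endpoints (exactly two distinct vertices; parallel edges are distinct
  identifiers with the same endpoints).\<close>
record ('v, 'e) mgraph =
  verts :: "'v set"
  edges :: "'e set"
  ends  :: "'e \<Rightarrow> 'v set"

definition multigraph :: "('v, 'e) mgraph \<Rightarrow> bool" where
  "multigraph G \<longleftrightarrow> finite (verts G) \<and> finite (edges G) \<and>
     (\<forall>e \<in> edges G. ends G e \<subseteq> verts G \<and> card (ends G e) = 2)"

definition edges_between :: "('v, 'e) mgraph \<Rightarrow> 'v set \<Rightarrow> 'v set \<Rightarrow> 'e set" where
  "edges_between G A B = {e \<in> edges G. \<exists>a \<in> A. \<exists>b \<in> B. ends G e = {a, b}}"

definition boundary :: "('v, 'e) mgraph \<Rightarrow> 'v set \<Rightarrow> 'e set" where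
  "boundary G Y = edges_between G Y (verts G - Y)"

definition adj :: "('v, 'e) mgraph \<Rightarrow> 'e set \<Rightarrow> ('v \<times> 'v) set" where
  "adj G F = {(x, y). \<exists>e \<in> F. ends G e = {x, y}}"

definition separates :: "('v, 'e) mgraph \<Rightarrow> 'e set \<Rightarrow> 'v set \<Rightarrow> 'v set \<Rightarrow> bool" where
  "separates G F A B \<longleftrightarrow> \<not> (\<exists>a \<in> A. \<exists>b \<in> B. (a, b) \<in> (adj G (edges G - F))\<^sup>*)"

definition mincut :: "('v, 'e) mgraph \<Rightarrow> 'v set \<Rightarrow> 'v set \<Rightarrow> nat" where
  "mincut G A B = (if A = {} \<or> B = {} then 0
     else (LEAST k. \<exists>F \<subseteq> edges G. card F = k \<and> separates G F A B))"

definition mincut_c :: "nat \<Rightarrow> ('v, 'e) mgraph \<Rightarrow> 'v set \<Rightarrow> 'v set \<Rightarrow> nat" where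
  "mincut_c c G A B = min (mincut G A B) c"

definition mimicking_network ::
  "nat \<Rightarrow> ('v, 'e) mgraph \<Rightarrow> 'v set \<Rightarrow> ('w, 'f) mgraph \<Rightarrow> ('v \<Rightarrow> 'w) \<Rightarrow> bool" where
  "mimicking_network c G T H copy \<longleftrightarrow>
     inj_on copy T \<and> copy ` T \<subseteq> verts H \<and>
     (\<forall>A B. A \<subseteq> T \<longrightarrow> B \<subseteq> T \<longrightarrow> A \<inter> B = {} \<longrightarrow>
        mincut_c c H (copy ` A) (copy ` B) = mincut_c c G A B)"

definition linked :: "nat \<Rightarrow> ('v, 'e) mgraph \<Rightarrow> 'v set \<Rightarrow> bool" where
  "linked c G X \<longleftrightarrow> (\<forall>A B. A \<inter> B = {} \<longrightarrow> A \<union> B = X \<longrightarrow>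
     card (edges_between G A B) \<ge>
       min (card (boundary G A \<inter> boundary G X)) (min (card (boundary G B \<inter> boundary G X)) c))"

text \<open>Contraction G/X: vertices are the blocks {v} (v not in X) and X itself;
  edges of G[X] are deleted (self-loops), all other edges kept (parallel edges kept).\<close>
definition blk :: "'v set \<Rightarrow> 'v \<Rightarrow> 'v set" where
  "blk X v = (if v \<in> X then X else {v})"

definition contract :: "('v, 'e) mgraph \<Rightarrow> 'v set \<Rightarrow> ('v set, 'e) mgraph" where
  "contract G X = \<lparr> verts = blk X ` verts G,
                    edges = {e \<in> edges G. \<not> ends G e \<subseteq> X},
                    ends = (\<lambda>e. blk X ` ends G e) \<rparr>"

end

theory Submission
  imports Defs
begin

lemma sep_all: "A \<inter> B = {} \<Longrightarrow> separates G (edges G) A B"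
  unfolding separates_def adj_def by auto

lemma mincut_le: "F \<subseteq> edges G \<Longrightarrow> separates G F A B \<Longrightarrow> mincut G A B \<le> card F"
  unfolding mincut_def by (auto intro: Least_le)

lemma mincut_attained:
  assumes "A \<noteq> {}" "B \<noteq> {}" "A \<inter> B = {}"
  shows "\<exists>F \<subseteq> edges G. card F = mincut G A B \<and> separates G F A B"
proof -
  have "\<exists>F \<subseteq> edges G. card F = card (edges G) \<and> separates G F A B"
    using sep_all[OF assms(3)] by blast
  then have "\<exists>F\<subseteq>edges G. card F = (LEAST k. \<exists>F \<subseteq> edges G. card F = k \<and> separates G F A B)
      \<and> separates G F A B"
    by (rule LeastI)
  then show ?thesis using assms unfolding mincut_def by simp
qed

lemma reach_cut:
  assumes "separates G F A B" "A \<subseteq> verts G"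
  shows "\<exists>Y \<subseteq> verts G. A \<subseteq> Y \<and> Y \<inter> B = {} \<and> boundary G Y \<subseteq> F"
proof -
  let ?R = "(adj G (edges G - F))\<^sup>*"
  define Y where "Y = {v \<in> verts G. \<exists>a\<in>A. (a, v) \<in> ?R}"
  have "A \<subseteq> Y" using assms(2) unfolding Y_def by blast
  moreover have "Y \<inter> B = {}" using assms(1) unfolding Y_def separates_def by blast
  moreover have "boundary G Y \<subseteq> F"
  proof
    fix e assume e: "e \<in> boundary G Y"
    then obtain p q where pq: "e \<in> edges G" "p \<in> Y" "q \<in> verts G" "q \<notin> Y" "ends G e = {p, q}"
      unfolding boundary_def edges_between_def by blast
    show "e \<in> F"
    proof (rule ccontr)
      assume "e \<notin> F"
      then have "(p, q) \<in> adj G (edges G - F)" using pq unfolding adj_def by blast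
      moreover obtain a where "a \<in> A" "(a, p) \<in> ?R" using pq unfolding Y_def by blast
      ultimately have "(a, q) \<in> ?R" by (meson rtrancl.rtrancl_into_rtrancl)
      then have "q \<in> Y" using pq \<open>a \<in> A\<close> unfolding Y_def by blast
      then show False using pq by simp
    qed
  qed
  moreover have "Y \<subseteq> verts G" unfolding Y_def by blast
  ultimately show ?thesis by blast
qed

lemma sep_from_Y:
  assumes "A \<subseteq> Y" "Y \<inter> B = {}"
    and "\<And>e x y. e \<in> edges H - F \<Longrightarrow> ends H e = {x, y} \<Longrightarrow> x \<in> Y \<Longrightarrow> y \<in> Y"
  shows "separates H F A B"
proof -
  have "v \<in> Y" if "(a, v) \<in> (adj H (edges H - F))\<^sup>*" "a \<in> Y" for a v
    using that
  proof (induction rule: rtrancl_induct)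
    case base then show ?case .
  next
    case (step y z)
    then show ?case using assms(3) unfolding adj_def by blast
  qed
  then show ?thesis using assms unfolding separates_def by blast
qed

lemma lift_sep:
  assumes "F \<subseteq> edges (contract G X)"
    and "separates (contract G X) F ((\<lambda>t. {t}) ` A) ((\<lambda>t. {t}) ` B)"
    and "A \<inter> X = {}" "B \<inter> X = {}"
  shows "separates G F A B"
proof -
  let ?H = "contract G X"
  have r: "(blk X a, blk X v) \<in> (adj ?H (edges ?H - F))\<^sup>*"
    if "(a, v) \<in> (adj G (edges G - F))\<^sup>*" for a v
    using that
  proof (induction rule: rtrancl_induct)
    case base then show ?case by simp
  next
    case (step y z)
    then obtain e where e: "e \<in> edges G" "e \<notin> F" "ends G e = {y, z}" unfolding adj_def by auto
    show ?case
    proof (cases "{y, z} \<subseteq> X")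
      case True
      then have "blk X y = blk X z" unfolding blk_def by auto
      then show ?thesis using step by simp
    next
      case False
      then have "(blk X y, blk X z) \<in> adj ?H (edges ?H - F)"
        using e unfolding adj_def contract_def by auto
      then show ?thesis using step by (meson rtrancl.rtrancl_into_rtrancl)
    qed
  qed
  have bl: "blk X a = {a}" if "a \<in> A \<union> B" for a
    using that assms(3,4) unfolding blk_def by auto
  show ?thesis unfolding separates_def
  proof (intro notI, elim bexE)
    fix a b
    assume ab: "a \<in> A" "b \<in> B" "(a, b) \<in> (adj G (edges G - F))\<^sup>*"
    have "(blk X a, blk X b) \<in> (adj ?H (edges ?H - F))\<^sup>*" using r ab(3) .
    moreover have "blk X a = {a}" "blk X b = {b}" using bl ab by auto
    ultimately have "({a}, {b}) \<in> (adj ?H (edges ?H - F))\<^sup>*" by simp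
    moreover have "{a} \<in> (\<lambda>t. {t}) ` A" "{b} \<in> (\<lambda>t. {t}) ` B" using ab by auto
    ultimately show False using assms(2) unfolding separates_def by blast
  qed
qed

lemma uncross:
  assumes mg: "multigraph G" and XV: "X \<subseteq> verts G" and lk: "linked c G X"
    and YV: "Y \<subseteq> verts G" and lt: "card (boundary G Y) < c"
  shows "\<exists>Y'. (Y' = Y - X \<or> Y' = Y \<union> X) \<and> card (boundary G Y') \<le> card (boundary G Y)"
proof -
  define XA where "XA = X \<inter> Y"
  define XB where "XB = X - Y"
  define D where "D = edges_between G XA XB"
  have fin: "finite (edges G)" using mg unfolding multigraph_def by auto
  have finb: "finite (boundary G Z)" for Z
    using fin unfolding boundary_def edges_between_def by auto
  have fine: "finite (edges_between G P Q)" for P Q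
    using fin unfolding edges_between_def by auto
  have DY: "D \<subseteq> boundary G Y"
    unfolding D_def boundary_def edges_between_def XA_def XB_def using XV by auto
  have "card D \<le> card (boundary G Y)" using DY finb by (simp add: card_mono)
  moreover have "card D \<ge> min (card (boundary G XA \<inter> boundary G X))
      (min (card (boundary G XB \<inter> boundary G X)) c)"
  proof -
    have "XA \<inter> XB = {}" "XA \<union> XB = X" unfolding XA_def XB_def by auto
    then show ?thesis using lk unfolding linked_def D_def by blast
  qed
  ultimately have cases: "card D \<ge> card (boundary G XA \<inter> boundary G X) \<or>
      card D \<ge> card (boundary G XB \<inter> boundary G X)" using lt by linarith
  have cdiff: "card (boundary G Y - D) = card (boundary G Y) - card D"
    using DY finb by (meson card_Diff_subset finite_subset)
  show ?thesis
  proof (cases "card D \<ge> card (boundary G XA \<inter> boundary G X)")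
    case True
    have sub: "boundary G (Y - X) \<subseteq> (boundary G Y - D) \<union> (boundary G XA \<inter> boundary G X)"
    proof
      fix e assume "e \<in> boundary G (Y - X)"
      then obtain u w where uw: "e \<in> edges G" "u \<in> Y - X" "w \<in> verts G" "w \<notin> Y - X"
          "ends G e = {u, w}"
        unfolding boundary_def edges_between_def by auto
      have uV: "u \<in> verts G" using uw YV by auto
      show "e \<in> (boundary G Y - D) \<union> (boundary G XA \<inter> boundary G X)"
      proof (cases "w \<in> Y")
        case True
        then have "w \<in> XA" using uw unfolding XA_def by auto
        then show ?thesis using uw uV unfolding boundary_def edges_between_def XA_def
          by (auto simp: insert_commute)
      next
        case False
        have "e \<notin> D"
        proof
          assume "e \<in> D"
          then obtain p q where "p \<in> X" "q \<in> X" "ends G e = {p, q}"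
            unfolding D_def edges_between_def XA_def XB_def by auto
          then have "u \<in> X" using uw(5) by (metis insert_iff insertI1 singletonD)
          then show False using uw by auto
        qed
        then show ?thesis using uw False unfolding boundary_def edges_between_def by auto
      qed
    qed
    have "card (boundary G (Y - X)) \<le> card ((boundary G Y - D) \<union> (boundary G XA \<inter> boundary G X))"
      using sub finb by (simp add: card_mono)
    also have "\<dots> \<le> card (boundary G Y - D) + card (boundary G XA \<inter> boundary G X)"
      by (rule card_Un_le)
    also have "\<dots> \<le> card (boundary G Y)" using cdiff True \<open>card D \<le> card (boundary G Y)\<close> by linarith
    finally show ?thesis by blast
  next
    case False
    then have True': "card D \<ge> card (boundary G XB \<inter> boundary G X)" using cases by auto
    have sub: "boundary G (Y \<union> X) \<subseteq> (boundary G Y - D) \<union> (boundary G XB \<inter> boundary G X)"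
    proof
      fix e assume "e \<in> boundary G (Y \<union> X)"
      then obtain u w where uw: "e \<in> edges G" "u \<in> Y \<union> X" "w \<in> verts G" "w \<notin> Y \<union> X"
          "ends G e = {u, w}"
        unfolding boundary_def edges_between_def by auto
      have uV: "u \<in> verts G" using uw YV XV by auto
      show "e \<in> (boundary G Y - D) \<union> (boundary G XB \<inter> boundary G X)"
      proof (cases "u \<in> Y")
        case True
        have "e \<notin> D"
        proof
          assume "e \<in> D"
          then obtain p q where "p \<in> X" "q \<in> X" "ends G e = {p, q}"
            unfolding D_def edges_between_def XA_def XB_def by auto
          then have "w \<in> X" using uw(5) by (metis insert_iff insertI1 insert_commute singletonD)
          then show False using uw by auto
        qed
        then show ?thesis using uw True unfolding boundary_def edges_between_def by auto
      next
        case False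
        then have "u \<in> XB" using uw unfolding XB_def by auto
        then show ?thesis using uw uV unfolding boundary_def edges_between_def XB_def
          by auto
      qed
    qed
    have "card (boundary G (Y \<union> X)) \<le> card ((boundary G Y - D) \<union> (boundary G XB \<inter> boundary G X))"
      using sub finb by (simp add: card_mono)
    also have "\<dots> \<le> card (boundary G Y - D) + card (boundary G XB \<inter> boundary G X)"
      by (rule card_Un_le)
    also have "\<dots> \<le> card (boundary G Y)" using cdiff True' \<open>card D \<le> card (boundary G Y)\<close> by linarith
    finally show ?thesis by blast
  qed
qed


lemma blk_key:
  assumes "X \<subseteq> Y \<or> X \<inter> Y = {}" "blk X u = blk X z" "z \<in> Y"
  shows "u \<in> Y"
proof (cases "u \<in> X")
  case True
  then have "blk X z = X" using assms(2) unfolding blk_def by simp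
  then have "z \<in> X" unfolding blk_def by (cases "z \<in> X") auto
  then show ?thesis using assms True by blast
next
  case False
  then have "blk X z = {u}" using assms(2) unfolding blk_def by simp
  then have "z = u" unfolding blk_def using False by (cases "z \<in> X") auto
  then show ?thesis using assms by simp
qed

lemma contract_sep:
  assumes mg: "multigraph G" and "A \<inter> X = {}" "B \<inter> X = {}" "A \<subseteq> Y" "Y \<inter> B = {}"
    and dich: "X \<subseteq> Y \<or> X \<inter> Y = {}"
  shows "separates (contract G X) (boundary G Y) ((\<lambda>t. {t}) ` A) ((\<lambda>t. {t}) ` B)"
    and "boundary G Y \<subseteq> edges (contract G X)"
proof -
  define YH where "YH = blk X ` Y"
  have key: "blk X u \<in> YH \<longleftrightarrow> u \<in> Y" for u
    using blk_key[OF dich] unfolding YH_def by blast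
  show "boundary G Y \<subseteq> edges (contract G X)"
  proof
    fix e assume "e \<in> boundary G Y"
    then obtain p q where "e \<in> edges G" "p \<in> Y" "q \<notin> Y" "ends G e = {p, q}"
      unfolding boundary_def edges_between_def by blast
    moreover have "\<not> {p, q} \<subseteq> X" using dich \<open>p \<in> Y\<close> \<open>q \<notin> Y\<close> by blast
    ultimately show "e \<in> edges (contract G X)" unfolding contract_def by simp
  qed
  show "separates (contract G X) (boundary G Y) ((\<lambda>t. {t}) ` A) ((\<lambda>t. {t}) ` B)"
  proof (rule sep_from_Y)
    show "(\<lambda>t. {t}) ` A \<subseteq> YH"
    proof
      fix b assume "b \<in> (\<lambda>t. {t}) ` A"
      then obtain a where a: "a \<in> A" "b = {a}" by blast
      then have "b = blk X a" using assms(2) unfolding blk_def by auto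
      then show "b \<in> YH" using key a assms(4) by blast
    qed
    show "YH \<inter> (\<lambda>t. {t}) ` B = {}"
    proof (rule ccontr)
      assume "YH \<inter> (\<lambda>t. {t}) ` B \<noteq> {}"
      then obtain b where b: "b \<in> B" "{b} \<in> YH" by blast
      then have "blk X b = {b}" using assms(3) unfolding blk_def by auto
      then have "b \<in> Y" using key b by metis
      then show False using b assms(5) by blast
    qed
    fix e \<beta> \<gamma>
    assume e: "e \<in> edges (contract G X) - boundary G Y" "ends (contract G X) e = {\<beta>, \<gamma>}" "\<beta> \<in> YH"
    have eG: "e \<in> edges G" using e unfolding contract_def by simp
    have c2: "card (ends G e) = 2" and ev: "ends G e \<subseteq> verts G"
      using mg eG unfolding multigraph_def by auto
    from c2 obtain x y where xy1: "ends G e = {x, y}" unfolding card_2_iff by blast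
    note xy = xy1 ev
    have "x \<in> Y \<longleftrightarrow> y \<in> Y"
    proof
      assume "x \<in> Y" show "y \<in> Y"
      proof (rule ccontr)
        assume "y \<notin> Y"
        then have "e \<in> boundary G Y" using eG xy \<open>x \<in> Y\<close> unfolding boundary_def edges_between_def by blast
        then show False using e by blast
      qed
    next
      assume "y \<in> Y" show "x \<in> Y"
      proof (rule ccontr)
        assume "x \<notin> Y"
        have "ends G e = {y, x}" using xy by (simp add: insert_commute)
        then have "e \<in> boundary G Y" using eG xy \<open>y \<in> Y\<close> \<open>x \<notin> Y\<close> unfolding boundary_def edges_between_def
          by blast
        then show False using e by blast
      qed
    qed
    then have "blk X x \<in> YH \<longleftrightarrow> blk X y \<in> YH" using key by blast
    moreover have "{blk X x, blk X y} = {\<beta>, \<gamma>}" using e(2) xy unfolding contract_def by simp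
    ultimately have "\<gamma> \<in> {blk X x, blk X y}" "\<beta> \<in> {blk X x, blk X y}"
      and "blk X x \<in> YH \<longleftrightarrow> blk X y \<in> YH" by auto
    then show "\<gamma> \<in> YH" using e(3) by blast
  qed
qed
theorem mainTheorem2:
  fixes c :: nat and G :: "('v, 'e) mgraph" and S T X :: "'v set"
  assumes "c \<ge> 1"
    and "multigraph G"
    and "verts G = S \<union> T" and "S \<inter> T = {}"
    and "X \<subseteq> S"
    and "linked c G X"
  shows "mimicking_network c G T (contract G X) (\<lambda>t. {t})"
proof -
  let ?H = "contract G X"
  have XT: "X \<inter> T = {}" using assms(4,5) by blast
  have XV: "X \<subseteq> verts G" using assms(3,5) by blast
  have fin: "finite (edges G)" using assms(2) unfolding multigraph_def by auto
  have eH: "edges ?H \<subseteq> edges G" unfolding contract_def by auto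
  have blkT: "blk X t = {t}" if "t \<in> T" for t using that XT unfolding blk_def by auto
  have "inj_on (\<lambda>t. {t}) T" by (auto intro: inj_onI)
  moreover have "(\<lambda>t. {t}) ` T \<subseteq> verts ?H"
  proof
    fix b assume "b \<in> (\<lambda>t. {t}) ` T"
    then obtain t where t: "t \<in> T" "b = {t}" by blast
    then have "b = blk X t" using blkT by simp
    moreover have "t \<in> verts G" using t assms(3) by blast
    ultimately show "b \<in> verts ?H" unfolding contract_def by simp
  qed
  moreover have "mincut_c c ?H ((\<lambda>t. {t}) ` A) ((\<lambda>t. {t}) ` B) = mincut_c c G A B"
    if AB: "A \<subseteq> T" "B \<subseteq> T" "A \<inter> B = {}" for A B
  proof (cases "A = {} \<or> B = {}")
    case True
    then show ?thesis unfolding mincut_c_def mincut_def by auto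
  next
    case False
    let ?A = "(\<lambda>t. {t}) ` A" and ?B = "(\<lambda>t. {t}) ` B"
    have ne: "?A \<noteq> {}" "?B \<noteq> {}" using False by auto
    have dj: "?A \<inter> ?B = {}" using AB(3) by blast
    have AX: "A \<inter> X = {}" "B \<inter> X = {}" using AB XT by auto
    have le1: "mincut G A B \<le> mincut ?H ?A ?B"
    proof -
      have ex: "\<exists>F \<subseteq> edges ?H. card F = mincut ?H ?A ?B \<and> separates ?H F ?A ?B"
        by (rule mincut_attained[OF ne dj])
      then obtain F where F: "F \<subseteq> edges ?H" "card F = mincut ?H ?A ?B" "separates ?H F ?A ?B"
        by (elim exE conjE) (intro that)
      have sG: "separates G F A B" by (rule lift_sep[where G=G and X=X and A=A and B=B and F=F, OF F(1) F(3) AX])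
      have FG: "F \<subseteq> edges G" using F(1) eH by blast
      show ?thesis using mincut_le[OF FG sG] F(2) by simp
    qed
    have le2: "mincut ?H ?A ?B \<le> mincut G A B" if lt: "mincut G A B < c"
    proof -
      have ne2: "A \<noteq> {}" "B \<noteq> {}" using False by auto
      have ex: "\<exists>F \<subseteq> edges G. card F = mincut G A B \<and> separates G F A B"
        by (rule mincut_attained[OF ne2 AB(3)])
      then obtain F where F: "F \<subseteq> edges G" "card F = mincut G A B" "separates G F A B"
        by (elim exE conjE) (intro that)
      have "A \<subseteq> verts G" using AB assms(3) by blast
      then obtain Y where Y: "Y \<subseteq> verts G" "A \<subseteq> Y" "Y \<inter> B = {}" "boundary G Y \<subseteq> F"
        using reach_cut[OF F(3)] by blast
      have "finite F" using F(1) fin finite_subset by blast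
      have "card (boundary G Y) \<le> card F" using card_mono[OF \<open>finite F\<close> Y(4)] .
      then have cY: "card (boundary G Y) \<le> mincut G A B" using F(2) by simp
      have "card (boundary G Y) < c" using cY lt by linarith
      then obtain Y' where Y': "Y' = Y - X \<or> Y' = Y \<union> X" "card (boundary G Y') \<le> card (boundary G Y)"
        using uncross[OF assms(2) XV assms(6) Y(1)] by blast
      have a1: "A \<subseteq> Y'" using Y'(1) Y(2) AX(1) by blast
      have a2: "Y' \<inter> B = {}" using Y'(1) Y(3) AX(2) by blast
      have a3: "X \<subseteq> Y' \<or> X \<inter> Y' = {}" using Y'(1) by blast
      note s = contract_sep[OF assms(2) AX a1 a2 a3]
      have "mincut ?H ?A ?B \<le> card (boundary G Y')" by (rule mincut_le[OF s(2) s(1)])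
      then show ?thesis using Y'(2) cY by linarith
    qed
    show ?thesis unfolding mincut_c_def using le1 le2 by (cases "mincut G A B < c") auto
  qed
  ultimately show ?thesis unfolding mimicking_network_def by blast
qed

end
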